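(* There is no finite (deterministic) matrix $\mathbb{M}$ such that $\vdash_{\mathbb{B}_\diamond}=\vdash_{\mathbb{M}}$ or $\rhd_{\mathbb{B}_\diamond}=\rhd_{\mathbb{M}}$.
   Context: $\mathbb{B}_\diamond=\langle\{0,1\},\cdot,\{1\}\rangle$ is the two-valued Nmatrix with one binary connective $\diamond$ (platypus) interpreted by $\diamond(0,0)=\{0\}$, $\diamond(1,1)=\{1\}$, $\diamond(0,1)=\diamond(1,0)=\{0,1\}$. For an Nmatrix/matrix $\mathbb{M}$ with designated set $D$, $\Gamma\rhd_{\mathbb{M}}\Delta$ iff every $\mathbb{M}$-valuation $v$ with $v(\Gamma)\subseteq D$ has $v(\Delta)\cap D\neq\emptyset$, and $\vdash_{\mathbb{M}}$ is its single-conclusion fragment ($\Gamma\vdash_{\mathbb{M}}\varphi$ iff $\Gamma\rhd_{\mathbb{M}}\{\varphi\}$). *)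

theory Defs
  imports Main
begin

datatype fm = Var nat | Dia fm fm

text \<open>The two-valued Nmatrix B_diamond; value 1 is True, 0 is False, designated set is {True}.\<close>
definition dia_B :: "bool \<Rightarrow> bool \<Rightarrow> bool set" where
  "dia_B x y = (if x = y then {x} else {False, True})"

definition B_val :: "(fm \<Rightarrow> bool) \<Rightarrow> bool" where
  "B_val v \<longleftrightarrow> (\<forall>a b. v (Dia a b) \<in> dia_B (v a) (v b))"

definition B_mc :: "fm set \<Rightarrow> fm set \<Rightarrow> bool" where
  "B_mc \<Gamma> \<Delta> \<longleftrightarrow> (\<forall>v. B_val v \<longrightarrow> (\<forall>g\<in>\<Gamma>. v g) \<longrightarrow> (\<exists>d\<in>\<Delta>. v d))"

definition B_sc :: "fm set \<Rightarrow> fm \<Rightarrow> bool" where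
  "B_sc \<Gamma> \<phi> \<longleftrightarrow> B_mc \<Gamma> {\<phi>}"

definition finite_matrix :: "'v set \<Rightarrow> ('v \<Rightarrow> 'v \<Rightarrow> 'v) \<Rightarrow> 'v set \<Rightarrow> bool" where
  "finite_matrix V f D \<longleftrightarrow> finite V \<and> V \<noteq> {} \<and> (\<forall>x\<in>V. \<forall>y\<in>V. f x y \<in> V) \<and> D \<subseteq> V"

definition M_val :: "'v set \<Rightarrow> ('v \<Rightarrow> 'v \<Rightarrow> 'v) \<Rightarrow> (fm \<Rightarrow> 'v) \<Rightarrow> bool" where
  "M_val V f v \<longleftrightarrow> (\<forall>p. v (Var p) \<in> V) \<and> (\<forall>a b. v (Dia a b) = f (v a) (v b))"

definition M_mc :: "'v set \<Rightarrow> ('v \<Rightarrow> 'v \<Rightarrow> 'v) \<Rightarrow> 'v set \<Rightarrow> fm set \<Rightarrow> fm set \<Rightarrow> bool" where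
  "M_mc V f D \<Gamma> \<Delta> \<longleftrightarrow> (\<forall>v. M_val V f v \<longrightarrow> v ` \<Gamma> \<subseteq> D \<longrightarrow> (\<exists>d\<in>\<Delta>. v d \<in> D))"

definition M_sc :: "'v set \<Rightarrow> ('v \<Rightarrow> 'v \<Rightarrow> 'v) \<Rightarrow> 'v set \<Rightarrow> fm set \<Rightarrow> fm \<Rightarrow> bool" where
  "M_sc V f D \<Gamma> \<phi> \<longleftrightarrow> M_mc V f D \<Gamma> {\<phi>}"

end

theory Submission
  imports Defs "HOL-Library.FuncSet"
begin

primrec theta :: "nat \<Rightarrow> fm" where
  "theta 0 = Var 1"
| "theta (Suc n) = Dia (theta n) (Var 1)"

primrec bv :: "fm \<Rightarrow> fm \<Rightarrow> bool" where
  "bv c (Var n) = (n = 0)"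
| "bv c (Dia a b) = (if bv c a = bv c b then bv c a else Dia a b = c)"

lemma bv_theta: "bv c (theta n) = False"
  by (induction n) auto

lemma theta_inj: "theta i = theta j \<Longrightarrow> i = j"
proof (induction i arbitrary: j)
  case 0 then show ?case by (cases j) auto
next
  case (Suc i) then show ?case by (cases j) auto
qed

lemma bv_val: "B_val (bv c)"
  unfolding B_val_def dia_B_def by auto

primrec Tf :: "('v \<Rightarrow> 'v \<Rightarrow> 'v) \<Rightarrow> nat \<Rightarrow> 'v \<Rightarrow> 'v" where
  "Tf f 0 y = y"
| "Tf f (Suc n) y = f (Tf f n y) y"

lemma Tf_in: "(\<forall>x\<in>V. \<forall>y\<in>V. f x y \<in> V) \<Longrightarrow> y \<in> V \<Longrightarrow> Tf f n y \<in> V"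
  by (induction n) auto

lemma M_theta: "M_val V f v \<Longrightarrow> v (theta n) = Tf f n (v (Var 1))"
  by (induction n) (auto simp: M_val_def)

lemma not_sc:
  assumes "finite_matrix V f D"
  shows "B_sc \<noteq> M_sc V f D"
proof
  assume eq: "B_sc = M_sc V f D"
  have fin: "finite V" and cl: "\<forall>x\<in>V. \<forall>y\<in>V. f x y \<in> V"
    using assms by (auto simp: finite_matrix_def)
  let ?g = "\<lambda>n. restrict (Tf f n) V"
  have "range ?g \<subseteq> V \<rightarrow>\<^sub>E V" using Tf_in[OF cl] by auto
  moreover have "finite (V \<rightarrow>\<^sub>E V)" using fin by (simp add: finite_PiE)
  ultimately have "finite (range ?g)" by (rule finite_subset)
  hence "\<not> inj ?g" using finite_imageD by blast
  then obtain i j where ij: "i \<noteq> j" "?g i = ?g j" unfolding inj_def by blast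
  have same: "Tf f i y = Tf f j y" if "y \<in> V" for y
    using fun_cong[OF ij(2), of y] that by simp
  let ?pi = "Dia (Var 0) (theta i)" and ?pj = "Dia (Var 0) (theta j)"
  have "M_sc V f D {?pi} ?pj"
    unfolding M_sc_def M_mc_def
  proof (intro allI impI)
    fix v assume v: "M_val V f v" and "v ` {?pi} \<subseteq> D"
    hence "v ?pi \<in> D" by simp
    moreover have "v (Var 1) \<in> V" using v by (simp add: M_val_def)
    ultimately show "\<exists>d\<in>{?pj}. v d \<in> D" using v same M_theta[OF v]
      by (simp add: M_val_def)
  qed
  moreover have "\<not> B_sc {?pi} ?pj"
  proof
    assume "B_sc {?pi} ?pj"
    hence "bv ?pi ?pj" using bv_val[of ?pi] unfolding B_sc_def B_mc_def
      by (auto simp: bv_theta)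
    moreover have "?pi \<noteq> ?pj" using theta_inj ij(1) by auto
    ultimately show False by (simp add: bv_theta)
  qed
  ultimately show False using eq by simp
qed

theorem theorem1:
  shows "\<not> (\<exists>(V :: 'v set) f D. finite_matrix V f D \<and> (B_sc = M_sc V f D \<or> B_mc = M_mc V f D))"
proof
  assume "\<exists>(V :: 'v set) f D. finite_matrix V f D \<and> (B_sc = M_sc V f D \<or> B_mc = M_mc V f D)"
  then obtain V :: "'v set" and f D where m: "finite_matrix V f D"
    and h: "B_sc = M_sc V f D \<or> B_mc = M_mc V f D" by blast
  have "B_sc = M_sc V f D"
    using h by (auto simp: B_sc_def M_sc_def fun_eq_iff)
  with not_sc[OF m] show False by simp
qed

end
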